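(* Let $n\ge p\ge1$, $0<\varepsilon<1$, $\lambda>0$. For every $X\in\mathbb{R}^{n\times p}$ with $\|X^\top X-I_p\|\le\varepsilon$ and every skew-symmetric $A\in\mathbb{R}^{n\times n}$, the field $F(X,A)=AX+\lambda X(X^\top X-I_p)$ satisfies $$\|AX\|^2+4\lambda^2(1-\varepsilon)\mathcal{N}(X)\le\|F(X,A)\|^2\le\|AX\|^2+4\lambda^2(1+\varepsilon)\mathcal{N}(X),$$ where $\mathcal{N}(X)=\frac14\|X^\top X-I_p\|^2$.
   Context: $\|\cdot\|$ denotes the Frobenius norm. Note $\nabla\mathcal{N}(X)=X(X^\top X-I_p)$, so $F(X,A)=AX+\lambda\nabla\mathcal{N}(X)$. *)

theory Defs
  imports "HOL-Analysis.Analysis"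
begin

(* For matrices M :: real^'c^'r, the library norm is the Euclidean norm of the
   vector of all entries, i.e. the Frobenius norm. *)

definition penaltyN :: "real^'p^'n \<Rightarrow> real" where
  "penaltyN X = (1/4) * (norm (transpose X ** X - mat 1))\<^sup>2"

definition fieldF :: "real \<Rightarrow> real^'p^'n \<Rightarrow> real^'n^'n \<Rightarrow> real^'p^'n" where
  "fieldF lam X A = A ** X + lam *\<^sub>R (X ** (transpose X ** X - mat 1))"

end

theory Submission
  imports Defs
begin

lemma frob_sq: "(norm (M::real^'c^'r))\<^sup>2 = (\<Sum>i\<in>UNIV. (norm (M$i))\<^sup>2)"
  by (simp add: power2_norm_eq_inner inner_vec_def)

lemma frob_sq_col: "(norm (M::real^'c^'r))\<^sup>2 = (\<Sum>j\<in>UNIV. (norm (column j M))\<^sup>2)"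
proof -
  have "(norm M)\<^sup>2 = (\<Sum>i\<in>UNIV. \<Sum>j\<in>UNIV. M$i$j * M$i$j)"
    by (simp add: power2_norm_eq_inner inner_vec_def)
  also have "\<dots> = (\<Sum>j\<in>UNIV. \<Sum>i\<in>UNIV. M$i$j * M$i$j)" by (rule sum.swap)
  also have "\<dots> = (\<Sum>j\<in>UNIV. (norm (column j M))\<^sup>2)"
    by (simp add: power2_norm_eq_inner inner_vec_def column_def)
  finally show ?thesis .
qed

lemma mm_entry: "((M::real^'k^'r) ** (N::real^'c^'k))$i$j = M$i \<bullet> column j N"
  by (simp add: matrix_matrix_mult_def inner_vec_def column_def)

lemma frob_submult: "norm ((M::real^'k^'r) ** (N::real^'c^'k)) \<le> norm M * norm N"
proof -
  have "(norm (M ** N))\<^sup>2 = (\<Sum>i\<in>UNIV. \<Sum>j\<in>UNIV. ((M ** N)$i$j)\<^sup>2)"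
    unfolding power2_norm_eq_inner inner_vec_def by (simp add: power2_eq_square)
  also have "\<dots> = (\<Sum>i\<in>UNIV. \<Sum>j\<in>UNIV. (M$i \<bullet> column j N)\<^sup>2)"
    by (simp only: mm_entry)
  also have "\<dots> \<le> (\<Sum>i\<in>UNIV. \<Sum>j\<in>UNIV. (norm (M$i))\<^sup>2 * (norm (column j N))\<^sup>2)"
  proof (intro sum_mono)
    fix i j
    have "\<bar>M$i \<bullet> column j N\<bar> \<le> norm (M$i) * norm (column j N)"
      by (rule Cauchy_Schwarz_ineq2)
    note cs = this
    have "(M$i \<bullet> column j N)\<^sup>2 \<le> (norm (M$i) * norm (column j N))\<^sup>2"
      using power_mono[OF cs abs_ge_zero, of 2] by simp
    then show "(M$i \<bullet> column j N)\<^sup>2 \<le> (norm (M$i))\<^sup>2 * (norm (column j N))\<^sup>2"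
      by (simp add: power_mult_distrib)
  qed
  also have "\<dots> = (norm M)\<^sup>2 * (norm N)\<^sup>2"
    by (simp only: frob_sq[of M] frob_sq_col[of N] sum_product)
  also have "\<dots> = (norm M * norm N)\<^sup>2" by (simp add: power_mult_distrib)
  finally have "(norm (M ** N))\<^sup>2 \<le> (norm M * norm N)\<^sup>2" .
  then show ?thesis
    by (rule power2_le_imp_le) simp
qed

lemma inner_trace: "(M::real^'c^'r) \<bullet> N = trace (transpose M ** N)"
proof -
  have "M \<bullet> N = (\<Sum>i\<in>UNIV. \<Sum>j\<in>UNIV. M$i$j * N$i$j)"
    by (simp add: inner_vec_def)
  also have "\<dots> = (\<Sum>j\<in>UNIV. \<Sum>i\<in>UNIV. M$i$j * N$i$j)" by (rule sum.swap)
  also have "\<dots> = trace (transpose M ** N)"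
    by (simp add: trace_def matrix_matrix_mult_def transpose_def)
  finally show ?thesis .
qed

lemma trace_transpose': "trace (transpose (M::real^'n^'n)) = trace M"
  by (simp add: trace_def transpose_def)

lemma transpose_minus': "transpose ((M::real^'c^'r) - N) = transpose M - transpose N"
  by (simp add: transpose_def vec_eq_iff)

lemma transpose_uminus': "transpose (- (M::real^'c^'r)) = - transpose M"
  by (simp add: transpose_def vec_eq_iff)

lemma mm_uminus_left: "(- (M::real^'k^'r)) ** (N::real^'c^'k) = - (M ** N)"
  by (simp add: matrix_matrix_mult_def vec_eq_iff sum_negf)

lemma mm_uminus_right: "(M::real^'k^'r) ** (- (N::real^'c^'k)) = - (M ** N)"
  by (simp add: matrix_matrix_mult_def vec_eq_iff sum_negf)

lemma trace_uminus': "trace (- (M::real^'n^'n)) = - trace M"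
  by (simp add: trace_def sum_negf)

lemma mm_diff_right: "(M::real^'k^'r) ** ((N::real^'c^'k) - P) = M ** N - M ** P"
  by (simp add: matrix_matrix_mult_def vec_eq_iff sum_subtractf algebra_simps)

lemma mm_add_left: "((M::real^'k^'r) + P) ** (N::real^'c^'k) = M ** N + P ** N"
  by (simp add: matrix_matrix_mult_def vec_eq_iff sum.distrib algebra_simps)

lemma sq_expand:
  fixes U V :: "'a::real_inner"
  shows "(norm (U + c *\<^sub>R V))\<^sup>2 = (norm U)\<^sup>2 + 2*c*(U \<bullet> V) + c\<^sup>2*(norm V)\<^sup>2"
proof -
  have "(norm (U + c *\<^sub>R V))\<^sup>2 = (U + c *\<^sub>R V) \<bullet> (U + c *\<^sub>R V)" by (rule power2_norm_eq_inner)
  also have "\<dots> = U \<bullet> U + 2*c*(U \<bullet> V) + c\<^sup>2*(V \<bullet> V)"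
    by (simp add: inner_add_left inner_add_right inner_commute[of V U] power2_eq_square algebra_simps)
  finally show ?thesis by (simp add: power2_norm_eq_inner)
qed

lemma aux:
  fixes l a e n c :: real
  assumes "l * a \<le> l * (e * n)" "l * (- (e * n)) \<le> l * a"
  shows "c + 4 * l * (1 - e) * (n / 4) \<le> c + l * (n + a)
       \<and> c + l * (n + a) \<le> c + 4 * l * (1 + e) * (n / 4)"
  using assms by (simp add: algebra_simps)

theorem proposition2:
  fixes X :: "real^'p^'n" and A :: "real^'n^'n" and eps lam :: real
  assumes "CARD('p) \<le> CARD('n)"
    and "0 < eps" and "eps < 1" and "lam > 0"
    and "norm (transpose X ** X - mat 1) \<le> eps"
    and "transpose A = - A"
  shows "(norm (A ** X))\<^sup>2 + 4 * lam\<^sup>2 * (1 - eps) * penaltyN X \<le> (norm (fieldF lam X A))\<^sup>2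
       \<and> (norm (fieldF lam X A))\<^sup>2 \<le> (norm (A ** X))\<^sup>2 + 4 * lam\<^sup>2 * (1 + eps) * penaltyN X"
proof -
  define S where "S = transpose X ** X - mat 1"
  have ST: "transpose S = S"
    by (simp add: S_def transpose_minus' matrix_transpose_mul)
  have XX: "transpose X ** X = S + mat 1" by (simp add: S_def)
  have F: "fieldF lam X A = A ** X + lam *\<^sub>R (X ** S)"
    by (simp add: fieldF_def S_def)
  define B where "B = transpose X ** transpose A ** X"
  have BT: "transpose B = - B"
    by (simp add: B_def matrix_transpose_mul assms(6) transpose_uminus' mm_uminus_left
        mm_uminus_right matrix_mul_assoc)
  have cross: "(A ** X) \<bullet> (X ** S) = 0"
  proof -
    have "(A ** X) \<bullet> (X ** S) = trace (B ** S)"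
      by (simp add: inner_trace B_def matrix_transpose_mul matrix_mul_assoc)
    also have "trace (B ** S) = trace (transpose (B ** S))" by (simp add: trace_transpose')
    also have "\<dots> = trace (S ** (- B))" by (simp add: matrix_transpose_mul ST BT)
    also have "\<dots> = - trace (B ** S)"
      by (simp add: mm_uminus_right trace_uminus' trace_mul_sym[of S B])
    finally have "(A ** X) \<bullet> (X ** S) = - ((A ** X) \<bullet> (X ** S))"
      using \<open>(A ** X) \<bullet> (X ** S) = trace (B ** S)\<close> by simp
    then show ?thesis by simp
  qed
  have XS: "(norm (X ** S))\<^sup>2 = (norm S)\<^sup>2 + S \<bullet> (S ** S)"
  proof -
    have "(norm (X ** S))\<^sup>2 = trace (transpose S ** (transpose X ** X) ** S)"
      by (simp add: power2_norm_eq_inner inner_trace matrix_transpose_mul matrix_mul_assoc)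
    also have "\<dots> = trace (S ** S ** S) + trace (S ** S)"
      by (simp add: ST XX matrix_add_ldistrib mm_add_left trace_add)
    also have "\<dots> = S \<bullet> (S ** S) + (norm S)\<^sup>2"
      by (simp add: power2_norm_eq_inner inner_trace ST matrix_mul_assoc)
    finally show ?thesis by simp
  qed
  have cub: "\<bar>S \<bullet> (S ** S)\<bar> \<le> eps * (norm S)\<^sup>2"
  proof -
    have "\<bar>S \<bullet> (S ** S)\<bar> \<le> norm S * norm (S ** S)" by (rule Cauchy_Schwarz_ineq2)
    also have "\<dots> \<le> norm S * (norm S * norm S)"
      by (intro mult_left_mono frob_submult) simp
    also have "\<dots> \<le> eps * (norm S * norm S)"
      using assms(5) by (intro mult_right_mono) (auto simp: S_def)
    finally show ?thesis by (simp add: power2_eq_square)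
  qed
  have main: "(norm (fieldF lam X A))\<^sup>2 = (norm (A ** X))\<^sup>2 + lam\<^sup>2 * ((norm S)\<^sup>2 + S \<bullet> (S ** S))"
  proof -
    have "(norm (fieldF lam X A))\<^sup>2 = (norm (A ** X))\<^sup>2 + 2 * lam * ((A ** X) \<bullet> (X ** S))
          + lam\<^sup>2 * (norm (X ** S))\<^sup>2"
      unfolding F by (rule sq_expand)
    then show ?thesis using cross XS by simp
  qed
  have P': "penaltyN X = (norm S)\<^sup>2 / 4" by (simp add: penaltyN_def S_def)
  have l2: "lam\<^sup>2 \<ge> 0" by simp
  have "lam\<^sup>2 * (S \<bullet> (S ** S)) \<le> lam\<^sup>2 * (eps * (norm S)\<^sup>2)"
    using cub l2 by (intro mult_left_mono) auto
  moreover have "lam\<^sup>2 * (- (eps * (norm S)\<^sup>2)) \<le> lam\<^sup>2 * (S \<bullet> (S ** S))"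
    using cub l2 by (intro mult_left_mono) auto
  ultimately show ?thesis
    unfolding main P' by (rule aux)
qed

end
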